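(* Let $\nu>0$. For every $x>0$, $$\lim_{t\to\infty} t^{\nu}\,E^{(\nu)}_x\Big[\Big(\frac{1}{R_t}\Big)^{2\nu}\Big]=\frac{1}{2^{\nu}\Gamma(\nu+1)}.$$
   Context: For $\mu\in\mathbb{R}$ and $x>0$, $P^{(\mu)}_x$ denotes the law on $\Omega=C([0,\infty);\mathbb{R})$ of the Bessel process with index $\mu$ (dimension $2(\mu+1)$) started at $x$, and $E^{(\mu)}_x$ the corresponding expectation; $R$ is the coordinate process on $\Omega$. $\Gamma$ is the gamma function. *)

theory Defs
  imports "HOL-Probability.Probability"
begin

definition bessel_I :: "real \<Rightarrow> real \<Rightarrow> real" where
  "bessel_I \<nu> z = (\<Sum>k. (z / 2) powr (2 * real k + \<nu>) / (fact k * Gamma (real k + \<nu> + 1)))"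

text \<open>Transition density of the Bessel process with index nu (dimension 2(nu+1)),
  started at x > 0, at time t > 0, evaluated at y > 0 (Revuz--Yor, Ch. XI):
  p_t(x,y) = (y/t) (y/x)^nu exp(-(x^2+y^2)/(2t)) I_nu(x y / t).\<close>
definition bessel_density :: "real \<Rightarrow> real \<Rightarrow> real \<Rightarrow> real \<Rightarrow> real" where
  "bessel_density \<nu> t x y =
     (y / t) * (y / x) powr \<nu> * exp (- (x\<^sup>2 + y\<^sup>2) / (2 * t)) * bessel_I \<nu> (x * y / t)"

text \<open>Law of R_t under P^(nu)_x (one-dimensional marginal), a measure on the reals
  concentrated on (0, infinity).\<close>
definition bessel_marginal :: "real \<Rightarrow> real \<Rightarrow> real \<Rightarrow> real measure" where
  "bessel_marginal \<nu> x t =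
     density lborel (\<lambda>y. indicator {0<..} y * ennreal (bessel_density \<nu> t x y))"

end

theory Submission
  imports Defs
begin
lemma Gamma_ge_fact:
  fixes \<nu> :: real assumes "\<nu> > 0"
  shows "fact k * Gamma (\<nu> + 1) \<le> Gamma (real k + \<nu> + 1)"
proof (induction k)
  case 0 then show ?case by simp
next
  case (Suc k)
  have nz: "real k + \<nu> + 1 \<notin> \<int>\<^sub>\<le>\<^sub>0"
  proof (rule notI)
    assume "real k + \<nu> + 1 \<in> \<int>\<^sub>\<le>\<^sub>0"
    then have "real k + \<nu> + 1 \<le> 0" by (rule nonpos_Ints_nonpos)
    with assms show False by simp
  qed
  have g: "Gamma (real (Suc k) + \<nu> + 1) = (real k + \<nu> + 1) * Gamma (real k + \<nu> + 1)"
    using Gamma_plus1[OF nz] by (simp add: algebra_simps)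
  have "fact (Suc k) * Gamma (\<nu> + 1) = (real k + 1) * (fact k * Gamma (\<nu> + 1))" by simp
  also have "\<dots> \<le> (real k + \<nu> + 1) * Gamma (real k + \<nu> + 1)"
    apply (rule mult_mono) using Suc assms by (auto intro!: mult_nonneg_nonneg)
  finally show ?case using g by simp
qed

lemma gauss_odd:
  fixes t :: real assumes t: "t > 0"
  shows "(\<integral>\<^sup>+y. ennreal (indicator {0<..} y * (y ^ (2*k+1) * exp (- y\<^sup>2 / (2*t)))) \<partial>lborel)
         = ennreal ((2*t) ^ (k+1) * fact k / 2)"
proof -
  define a where "a = sqrt (2*t)"
  have a: "a > 0" "a\<^sup>2 = 2*t" using t by (auto simp: a_def)
  have "(\<integral>\<^sup>+u. ennreal (indicator {0..} u *\<^sub>R (exp (-u\<^sup>2)*u^(2 * k + 1))) \<partial>lborel)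
        = ennreal (fact k / 2)" (is "?I = _")
  proof -
    note h = gaussian_moment_odd_pos[of k]
    have "(\<integral>\<^sup>+u. ennreal (indicator {0..} u *\<^sub>R (exp (-u\<^sup>2)*u^(2 * k + 1))) \<partial>lborel)
       = integral\<^sup>L lborel (\<lambda>u. indicator {0..} u *\<^sub>R (exp (-u\<^sup>2)*u^(2 * k + 1)))"
      by (rule nn_integral_eq_integral[OF integrable.intros[OF h]]) (simp add: indicator_def)
    then show ?thesis by (simp only: has_bochner_integral_integral_eq[OF h])
  qed
  note g = this
  have "(\<integral>\<^sup>+y. ennreal (indicator {0<..} y * (y ^ (2*k+1) * exp (- y\<^sup>2 / (2*t)))) \<partial>lborel)
     = ennreal \<bar>a\<bar> * (\<integral>\<^sup>+u. ennreal (indicator {0<..} (0 + a*u) * ((0+a*u) ^ (2*k+1) * exp (- (0+a*u)\<^sup>2 / (2*t)))) \<partial>lborel)"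
    using a by (intro nn_integral_real_affine) (measurable, auto simp: greaterThan_def[symmetric])
  also have "\<dots> = ennreal a * (\<integral>\<^sup>+u. ennreal (a^(2*k+1)) * ennreal (indicator {0..} u *\<^sub>R (exp (-u\<^sup>2)*u^(2 * k + 1))) \<partial>lborel)"
  proof (intro arg_cong2[where f="(*)"] nn_integral_cong)
    show "ennreal \<bar>a\<bar> = ennreal a" using a by simp
  next
    fix u :: real
    have e: "(a*u)\<^sup>2 / (2*t) = u\<^sup>2" using a t by (simp add: power_mult_distrib)
    show "ennreal (indicator {0<..} (0 + a*u) * ((0+a*u) ^ (2*k+1) * exp (- (0+a*u)\<^sup>2 / (2*t))))
      = ennreal (a^(2*k+1)) * ennreal (indicator {0..} u *\<^sub>R (exp (-u\<^sup>2)*u^(2 * k + 1)))"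
    proof (cases "u > 0")
      case True
      have r: "indicator {0<..} (0 + a*u) * ((0+a*u) ^ (2*k+1) * exp (- (0+a*u)\<^sup>2 / (2*t)))
         = a^(2*k+1) * (indicator {0..} u *\<^sub>R (exp (-u\<^sup>2)*u^(2 * k + 1)))"
        using True a(1) e by (simp add: indicator_def power_mult_distrib)
      show ?thesis unfolding r using a(1) by (intro ennreal_mult) (auto simp: indicator_def)
    next
      case False
      then have "u \<le> 0" by simp
      then show ?thesis
      proof -
        have z1: "indicator {0<..} (0+a*u) = (0::real)"
          using a(1) \<open>u \<le> 0\<close> by (simp add: indicator_def zero_less_mult_iff)
        have z2: "indicator {0..} u *\<^sub>R (exp (-u\<^sup>2)*u^(2 * k + 1)) = (0::real)"
          using \<open>u \<le> 0\<close> by (cases "u = 0") (auto simp: indicator_def)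
        show ?thesis unfolding z1 z2 by simp
      qed
    qed
  qed
  also have "\<dots> = ennreal a * (ennreal (a^(2*k+1)) * ennreal (fact k / 2))"
    using g by (subst nn_integral_cmult) simp_all
  also have "\<dots> = ennreal (a * (a^(2*k+1) * (fact k / 2)))"
  proof -
    have 1: "ennreal (a * (a^(2*k+1) * (fact k / 2))) = ennreal a * ennreal (a^(2*k+1) * (fact k / 2))"
      using a by (intro ennreal_mult) auto
    have 2: "ennreal (a^(2*k+1) * (fact k / 2)) = ennreal (a^(2*k+1)) * ennreal (fact k / 2)"
      using a by (intro ennreal_mult) auto
    show ?thesis unfolding 1 2 ..
  qed
  also have "a * (a^(2*k+1) * (fact k / 2)) = (2*t)^(k+1) * fact k / 2"
  proof -
    have "a * (a^(2*k+1) * (fact k / 2)) = (a^2)^(k+1) * fact k / 2"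
      by (metis (no_types, lifting) add.commute mult.assoc mult_2 power_Suc power_add power_mult times_divide_eq_right Suc_eq_plus1 add_Suc)
    then show ?thesis using a(2) by simp
  qed
  finally show ?thesis .
qed

lemma gen_alg:
  fixes A B P Q F V Y t :: real assumes "V > 0"
  shows "(Y / t) * (V * P) * (A * B) * (Q * (Y ^ (2*k) * V)) / F * (1 / (V * V))
     = (A / t * P * Q / F) * (Y ^ (2*k+1) * B)"
proof -
  have "V * V \<noteq> 0" using assms by simp
  have "(Y / t) * (V * P) * (A * B) * (Q * (Y ^ (2*k) * V)) / F * (1 / (V * V))
      = (Y / t) * P * (A * B) * (Q * (Y ^ (2*k))) / F * ((V * V) / (V * V))" by (simp add: mult_ac)
  also have "\<dots> = (A / t * P * Q / F) * (Y ^ (2*k+1) * B)" using \<open>V*V \<noteq> 0\<close> by (simp add: mult_ac)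
  finally show ?thesis .
qed

lemma term_identity:
  fixes x y t \<nu> :: real and k :: nat
  assumes x: "x > 0" and y: "y > 0" and t: "t > 0"
  shows "(y / t) * (y / x) powr \<nu> * exp (- (x\<^sup>2 + y\<^sup>2) / (2 * t)) *
           ((x * y / t) / 2) powr (2 * real k + \<nu>) / (fact k * Gamma (real k + \<nu> + 1))
         * (1 / y) powr (2 * \<nu>)
       = (exp (- x\<^sup>2 / (2*t)) / t * x powr (-\<nu>) * (x / (2*t)) powr (2 * real k + \<nu>)
            / (fact k * Gamma (real k + \<nu> + 1))) * (y ^ (2*k+1) * exp (- y\<^sup>2 / (2*t)))"
proof -
  have e: "exp (- (x\<^sup>2 + y\<^sup>2) / (2 * t)) = exp (- x\<^sup>2 / (2*t)) * exp (- y\<^sup>2 / (2*t))"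
    using t by (simp add: exp_add[symmetric] field_simps)
  have p1: "(y / x) powr \<nu> = y powr \<nu> * x powr (-\<nu>)"
    using x y powr_divide[of y x \<nu>] powr_minus[of x \<nu>] by (simp add: divide_inverse)
  have p2: "((x * y / t) / 2) powr (2 * real k + \<nu>) = (x / (2*t)) powr (2 * real k + \<nu>) * (y ^ (2*k) * y powr \<nu>)"
  proof -
    have eq: "(x * y / t) / 2 = (x / (2*t)) * y" by simp
    have "((x * y / t) / 2) powr (2 * real k + \<nu>) = (x / (2*t)) powr (2 * real k + \<nu>) * y powr (2 * real k + \<nu>)"
      unfolding eq by (rule powr_mult)
    moreover have "y powr (2 * real k + \<nu>) = y ^ (2*k) * y powr \<nu>"
      using powr_realpow[OF y, of "2*k"] by (simp add: powr_add)
    ultimately show ?thesis by simp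
  qed
  have p3: "(1 / y) powr (2 * \<nu>) = 1 / (y powr \<nu> * y powr \<nu>)"
    using y by (simp add: inverse_powr powr_add[symmetric] divide_inverse)
  have ypos: "y powr \<nu> > 0" using y by simp
  show ?thesis
    unfolding e p1 p2 p3 by (rule gen_alg[OF ypos])
qed

lemma summable_S:
  fixes \<nu> s :: real assumes "\<nu> > 0"
  shows "summable (\<lambda>n. inverse (Gamma (real n + \<nu> + 1)) * s ^ n)"
proof (rule summable_comparison_test[OF _ summable_mult[OF summable_exp[of "\<bar>s\<bar>"], of "inverse (Gamma (\<nu>+1))"]])
  show "\<exists>N. \<forall>n\<ge>N. norm (inverse (Gamma (real n + \<nu> + 1)) * s ^ n) \<le> inverse (Gamma (\<nu>+1)) * (inverse (fact n) * \<bar>s\<bar> ^ n)"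
  proof (intro exI allI impI)
    fix n :: nat
    have g0: "Gamma (\<nu>+1) > 0" using assms by simp
    have g1: "Gamma (real n + \<nu> + 1) > 0" using assms by simp
    have "inverse (Gamma (real n + \<nu> + 1)) \<le> inverse (Gamma (\<nu>+1) * fact n)"
      using Gamma_ge_fact[OF assms, of n] g0 by (intro le_imp_inverse_le) (auto simp: mult.commute)
    then have "inverse (Gamma (real n + \<nu> + 1)) * \<bar>s\<bar>^n \<le> inverse (Gamma (\<nu>+1) * fact n) * \<bar>s\<bar>^n"
      by (rule mult_right_mono) simp
    then show "norm (inverse (Gamma (real n + \<nu> + 1)) * s ^ n) \<le> inverse (Gamma (\<nu>+1)) * (inverse (fact n) * \<bar>s\<bar> ^ n)"
      using g1 by (simp add: abs_mult power_abs mult_ac)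
  qed
qed

lemma summable_bessel:
  fixes \<nu> z :: real assumes "\<nu> > 0" "z > 0"
  shows "summable (\<lambda>k. (z / 2) powr (2 * real k + \<nu>) / (fact k * Gamma (real k + \<nu> + 1)))"
proof -
  have "summable (\<lambda>k. (z/2) powr \<nu> * (inverse (Gamma (real k + \<nu> + 1)) * ((z/2)^2) ^ k) / fact k)"
  proof (rule summable_comparison_test[OF _ summable_mult[OF summable_S[OF assms(1), of "(z/2)^2"], of "(z/2) powr \<nu>"]])
    show "\<exists>N. \<forall>n\<ge>N. norm ((z/2) powr \<nu> * (inverse (Gamma (real n + \<nu> + 1)) * ((z/2)^2) ^ n) / fact n)
           \<le> (z/2) powr \<nu> * (inverse (Gamma (real n + \<nu> + 1)) * ((z/2)^2) ^ n)"
    proof (intro exI allI impI)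
      fix n :: nat
      have nn: "0 \<le> (z/2) powr \<nu> * (inverse (Gamma (real n + \<nu> + 1)) * ((z/2)^2) ^ n)"
        using assms by simp
      have "(z/2) powr \<nu> * (inverse (Gamma (real n + \<nu> + 1)) * ((z/2)^2) ^ n) / fact n
           \<le> (z/2) powr \<nu> * (inverse (Gamma (real n + \<nu> + 1)) * ((z/2)^2) ^ n)"
      proof -
        have "(z/2) powr \<nu> * (inverse (Gamma (real n + \<nu> + 1)) * ((z/2)^2) ^ n) * 1
           \<le> (z/2) powr \<nu> * (inverse (Gamma (real n + \<nu> + 1)) * ((z/2)^2) ^ n) * fact n"
          using mult_left_mono[OF fact_ge_1 nn] by simp
        then show ?thesis by (simp add: divide_le_eq)
      qed
      then show "norm ((z/2) powr \<nu> * (inverse (Gamma (real n + \<nu> + 1)) * ((z/2)^2) ^ n) / fact n)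
           \<le> (z/2) powr \<nu> * (inverse (Gamma (real n + \<nu> + 1)) * ((z/2)^2) ^ n)"
        using nn by simp
    qed
  qed
  moreover have "(z / 2) powr (2 * real k + \<nu>) / (fact k * Gamma (real k + \<nu> + 1))
     = (z/2) powr \<nu> * (inverse (Gamma (real k + \<nu> + 1)) * ((z/2)^2) ^ k) / fact k" for k
  proof -
    have "(z/2) powr (2 * real k + \<nu>) = (z/2) powr \<nu> * (z/2) powr (real (2*k))"
      by (simp add: powr_add mult.commute)
    also have "(z/2) powr (real (2*k)) = ((z/2)^2)^k"
      using assms by (subst powr_realpow) (simp_all add: power_mult)
    finally have h: "(z/2) powr (2 * real k + \<nu>) = (z/2) powr \<nu> * ((z/2)^2)^k" .
    have aux: "\<And>c w f g :: real. c * w / (f * g) = c * (inverse g * w) / f"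
      by (simp add: divide_inverse mult_ac inverse_mult_distrib)
    show ?thesis unfolding h by (rule aux)
  qed
  ultimately show ?thesis by simp
qed

definition Sfun :: "real \<Rightarrow> real \<Rightarrow> real" where
  "Sfun \<nu> s = (\<Sum>n. inverse (Gamma (real n + \<nu> + 1)) * s ^ n)"

lemma coef_alg:
  fixes E T X Tv f G w iTv Tk :: real
  assumes "T > 0" "X \<noteq> 0" "Tk \<noteq> 0" "f > 0" "G \<noteq> 0"
  shows "E / (T/2) * inverse X * (X * iTv * (w * inverse Tk)) / (f * G) * (T * Tk * f / 2)
       = iTv * E * (inverse G * w)"
  using assms by (simp add: field_simps)

lemma coef_identity:
  fixes x t \<nu> :: real and k :: nat
  assumes x: "x > 0" and t: "t > 0" and nu: "\<nu> > 0"
  shows "(exp (- x\<^sup>2 / (2*t)) / t * x powr (-\<nu>) * (x / (2*t)) powr (2 * real k + \<nu>)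
            / (fact k * Gamma (real k + \<nu> + 1))) * ((2*t) ^ (k+1) * fact k / 2)
       = (2*t) powr (-\<nu>) * exp (- x\<^sup>2 / (2*t)) * (inverse (Gamma (real k + \<nu> + 1)) * (x\<^sup>2 / (2*t)) ^ k)"
proof -
  define T where "T = 2*t"
  have T: "T > 0" using t by (simp add: T_def)
  have tt: "t = T/2" by (simp add: T_def)
  have q: "(x / T) powr (2 * real k + \<nu>) = (x powr \<nu> * inverse (T powr \<nu>)) * ((x\<^sup>2 / T) ^ k * inverse (T ^ k))"
  proof -
    have "(x / T) powr (2 * real k + \<nu>) = (x/T) powr \<nu> * (x/T) powr (real (2*k))"
      by (simp add: powr_add mult.commute)
    also have "(x/T) powr (real (2*k)) = (x/T)^(2*k)"
      using x T by (subst powr_realpow) simp_all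
    also have "(x/T)^(2*k) = (x\<^sup>2 / T) ^ k * inverse (T ^ k)"
    proof -
      have "(x/T)^(2*k) = ((x/T)^2)^k" by (simp add: power_mult)
      also have "\<dots> = ((x\<^sup>2 / T) * inverse T)^k" by (simp add: power2_eq_square divide_inverse mult_ac)
      also have "\<dots> = (x\<^sup>2 / T) ^ k * inverse (T ^ k)" by (simp only: power_mult_distrib power_inverse)
      finally show ?thesis .
    qed
    also have "(x/T) powr \<nu> = x powr \<nu> * inverse (T powr \<nu>)"
      using x T powr_divide[of x T \<nu>] by (simp only: divide_inverse)
    finally show ?thesis .
  qed
  have m: "x powr (-\<nu>) = inverse (x powr \<nu>)" by (simp add: powr_minus)
  have m2: "T powr (-\<nu>) = inverse (T powr \<nu>)" by (simp add: powr_minus)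
  have pk: "T ^ (k+1) = T * T^k" by simp
  have "real k + \<nu> + 1 > 0" using nu by simp
  then have "Gamma (real k + \<nu> + 1) > 0" by (rule Gamma_real_pos)
  then have G: "Gamma (real k + \<nu> + 1) \<noteq> 0" by simp
  show ?thesis
    unfolding T_def[symmetric] tt[symmetric]
    unfolding q m m2 pk
    using coef_alg[of T "x powr \<nu>" "T^k" "fact k" "Gamma (real k + \<nu> + 1)"
        "exp (- x\<^sup>2 / T)" "inverse (T powr \<nu>)" "(x\<^sup>2 / T) ^ k"] T x nu G
    unfolding tt by (simp add: mult_ac)
qed

lemma density_series:
  fixes \<nu> x t y :: real
  assumes nu: "\<nu> > 0" and x: "x > 0" and t: "t > 0" and y: "y > 0"
  defines "u \<equiv> \<lambda>k. (y / t) * (y / x) powr \<nu> * exp (- (x\<^sup>2 + y\<^sup>2) / (2 * t)) *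
           ((x * y / t) / 2) powr (2 * real k + \<nu>) / (fact k * Gamma (real k + \<nu> + 1))"
  shows "u sums bessel_density \<nu> t x y" "\<And>k. u k \<ge> 0"
proof -
  define C where "C = (y / t) * (y / x) powr \<nu> * exp (- (x\<^sup>2 + y\<^sup>2) / (2 * t))"
  have sm: "summable (\<lambda>k. (x * y / t / 2) powr (2 * real k + \<nu>) / (fact k * Gamma (real k + \<nu> + 1)))"
    using summable_bessel[OF nu, of "x*y/t"] x y t by simp
  have "(\<lambda>k. C * ((x * y / t / 2) powr (2 * real k + \<nu>) / (fact k * Gamma (real k + \<nu> + 1))))
      sums (C * bessel_I \<nu> (x*y/t))"
    unfolding bessel_I_def by (rule sums_mult[OF summable_sums[OF sm]])
  moreover have "C * bessel_I \<nu> (x*y/t) = bessel_density \<nu> t x y"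
    by (simp add: C_def bessel_density_def)
  ultimately show "u sums bessel_density \<nu> t x y"
    by (simp add: u_def C_def mult.assoc times_divide_eq_right)
  show "\<And>k. u k \<ge> 0"
    unfolding u_def using x y t nu by (intro divide_nonneg_nonneg mult_nonneg_nonneg) auto
qed

lemma nn_bessel:
  fixes \<nu> x t :: real
  assumes nu: "\<nu> > 0" and x: "x > 0" and t: "t > 0"
  shows "(\<lambda>y. indicator {0<..} y * ennreal (bessel_density \<nu> t x y)) \<in> borel_measurable lborel"
    and "(\<integral>\<^sup>+y. (indicator {0<..} y * ennreal (bessel_density \<nu> t x y)) * ennreal ((1 / y) powr (2 * \<nu>)) \<partial>lborel)
         = ennreal ((2*t) powr (-\<nu>) * exp (- x\<^sup>2 / (2*t)) * Sfun \<nu> (x\<^sup>2 / (2*t)))"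
proof -
  define u where "u = (\<lambda>k y. (y / t) * (y / x) powr \<nu> * exp (- (x\<^sup>2 + y\<^sup>2) / (2 * t)) *
           ((x * y / t) / 2) powr (2 * real k + \<nu>) / (fact k * Gamma (real k + \<nu> + 1)))"
  define c where "c = (\<lambda>k. exp (- x\<^sup>2 / (2*t)) / t * x powr (-\<nu>) * (x / (2*t)) powr (2 * real k + \<nu>)
            / (fact k * Gamma (real k + \<nu> + 1)))"
  define h where "h = (\<lambda>k y. indicator {0<..} y * (y ^ (2*k+1) * exp (- y\<^sup>2 / (2*t))))"
  have c0: "c k \<ge> 0" for k
    unfolding c_def using x t nu by (intro divide_nonneg_nonneg mult_nonneg_nonneg) auto
  have u_meas: "(\<lambda>y. ennreal (indicator {0<..} y * u k y)) \<in> borel_measurable lborel" for k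
    unfolding u_def by measurable
  have h_meas': "h k \<in> borel_measurable borel" for k
    unfolding h_def by measurable
  have h_meas: "(\<lambda>y. ennreal (h k y)) \<in> borel_measurable lborel" for k
    using h_meas'[of k] by measurable
  have D_eq: "indicator {0<..} y * ennreal (bessel_density \<nu> t x y) = (\<Sum>k. ennreal (indicator {0<..} y * u k y))" for y
  proof (cases "y > 0")
    case True
    note ds = density_series[OF nu x t True]
    have "(\<Sum>k. ennreal (indicator {0<..} y * u k y)) = (\<Sum>k. ennreal (u k y))"
      using True by simp
    also have "\<dots> = ennreal (\<Sum>k. u k y)"
      using ds unfolding u_def by (intro suminf_ennreal2) (auto simp: sums_iff)
    also have "(\<Sum>k. u k y) = bessel_density \<nu> t x y"
      using ds unfolding u_def by (simp add: sums_iff)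
    finally show ?thesis using True by simp
  next
    case False
    then show ?thesis by simp
  qed
  show D_meas: "(\<lambda>y. indicator {0<..} y * ennreal (bessel_density \<nu> t x y)) \<in> borel_measurable lborel"
    unfolding D_eq using u_meas by measurable
  have pw: "(indicator {0<..} y * ennreal (bessel_density \<nu> t x y)) * ennreal ((1 / y) powr (2 * \<nu>))
         = (\<Sum>k. ennreal (c k) * ennreal (h k y))" for y
  proof (cases "y > 0")
    case True
    have "(indicator {0<..} y * ennreal (bessel_density \<nu> t x y)) * ennreal ((1 / y) powr (2 * \<nu>))
        = (\<Sum>k. ennreal (u k y)) * ennreal ((1 / y) powr (2 * \<nu>))"
      unfolding D_eq using True by simp
    also have "\<dots> = (\<Sum>k. ennreal (u k y) * ennreal ((1 / y) powr (2 * \<nu>)))"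
      by (rule ennreal_suminf_multc[symmetric])
    also have "\<dots> = (\<Sum>k. ennreal (c k) * ennreal (h k y))"
    proof (rule suminf_cong)
      fix k
      have u0: "u k y \<ge> 0" using density_series(2)[OF nu x t True] unfolding u_def by blast
      have "ennreal (u k y) * ennreal ((1 / y) powr (2 * \<nu>)) = ennreal (u k y * (1 / y) powr (2 * \<nu>))"
        using u0 by (simp add: ennreal_mult)
      also have "u k y * (1 / y) powr (2 * \<nu>) = c k * h k y"
        unfolding u_def c_def h_def using term_identity[OF x True t, of \<nu> k] True by simp
      also have "ennreal (c k * h k y) = ennreal (c k) * ennreal (h k y)"
        by (rule ennreal_mult[OF c0]) (use True in \<open>simp add: h_def\<close>)
      finally show "ennreal (u k y) * ennreal ((1 / y) powr (2 * \<nu>)) = ennreal (c k) * ennreal (h k y)" .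
    qed
    finally show ?thesis .
  next
    case False
    then show ?thesis by (simp add: h_def)
  qed
  have "(\<integral>\<^sup>+y. (indicator {0<..} y * ennreal (bessel_density \<nu> t x y)) * ennreal ((1 / y) powr (2 * \<nu>)) \<partial>lborel)
      = (\<integral>\<^sup>+y. (\<Sum>k. ennreal (c k) * ennreal (h k y)) \<partial>lborel)"
    unfolding pw ..
  also have "\<dots> = (\<Sum>k. \<integral>\<^sup>+y. ennreal (c k) * ennreal (h k y) \<partial>lborel)"
    using h_meas' by (intro nn_integral_suminf) measurable
  also have "\<dots> = (\<Sum>k. ennreal (c k * ((2*t) ^ (k+1) * fact k / 2)))"
  proof (rule suminf_cong)
    fix k
    have "(\<integral>\<^sup>+y. ennreal (c k) * ennreal (h k y) \<partial>lborel) = ennreal (c k) * (\<integral>\<^sup>+y. ennreal (h k y) \<partial>lborel)"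
      using h_meas by (rule nn_integral_cmult)
    also have "(\<integral>\<^sup>+y. ennreal (h k y) \<partial>lborel) = ennreal ((2*t) ^ (k+1) * fact k / 2)"
      unfolding h_def by (rule gauss_odd[OF t])
    finally show "(\<integral>\<^sup>+y. ennreal (c k) * ennreal (h k y) \<partial>lborel) = ennreal (c k * ((2*t) ^ (k+1) * fact k / 2))"
      using c0 t by (simp add: ennreal_mult)
  qed
  also have "\<dots> = (\<Sum>k. ennreal ((2*t) powr (-\<nu>) * exp (- x\<^sup>2 / (2*t)) * (inverse (Gamma (real k + \<nu> + 1)) * (x\<^sup>2 / (2*t)) ^ k)))"
    unfolding c_def using coef_identity[OF x t nu] by simp
  also have "\<dots> = ennreal (\<Sum>k. (2*t) powr (-\<nu>) * exp (- x\<^sup>2 / (2*t)) * (inverse (Gamma (real k + \<nu> + 1)) * (x\<^sup>2 / (2*t)) ^ k))"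
    using nu t x by (intro suminf_ennreal2 summable_mult summable_S) auto
  also have "(\<Sum>k. (2*t) powr (-\<nu>) * exp (- x\<^sup>2 / (2*t)) * (inverse (Gamma (real k + \<nu> + 1)) * (x\<^sup>2 / (2*t)) ^ k))
      = (2*t) powr (-\<nu>) * exp (- x\<^sup>2 / (2*t)) * Sfun \<nu> (x\<^sup>2 / (2*t))"
    unfolding Sfun_def using summable_S[OF nu] by (rule suminf_mult)
  finally show "(\<integral>\<^sup>+y. (indicator {0<..} y * ennreal (bessel_density \<nu> t x y)) * ennreal ((1 / y) powr (2 * \<nu>)) \<partial>lborel)
         = ennreal ((2*t) powr (-\<nu>) * exp (- x\<^sup>2 / (2*t)) * Sfun \<nu> (x\<^sup>2 / (2*t)))" .
qed

lemma Sfun_lim: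
  fixes \<nu> x :: real assumes nu: "\<nu> > 0"
  shows "((\<lambda>t. Sfun \<nu> (x\<^sup>2 / (2*t))) \<longlongrightarrow> inverse (Gamma (\<nu> + 1))) at_top"
proof -
  have L0: "(Sfun \<nu> \<longlongrightarrow> (\<lambda>n. inverse (Gamma (real n + \<nu> + 1))) 0) (at 0)"
  proof (rule powser_limit_0[where s=1])
    fix s :: real
    show "(\<lambda>n. inverse (Gamma (real n + \<nu> + 1)) * s ^ n) sums Sfun \<nu> s"
      unfolding Sfun_def by (rule summable_sums[OF summable_S[OF nu]])
  qed simp
  then have L: "(Sfun \<nu> \<longlongrightarrow> inverse (Gamma (\<nu> + 1))) (at 0)" by simp
  have "((\<lambda>t. x\<^sup>2 / 2 * inverse t) \<longlongrightarrow> x\<^sup>2 / 2 * 0) at_top"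
      by (intro tendsto_mult tendsto_const tendsto_inverse_0_at_top filterlim_ident)
  then have g0: "((\<lambda>t. x\<^sup>2 / (2*t)) \<longlongrightarrow> 0) at_top"
  proof -
    assume a: "((\<lambda>t. x\<^sup>2 / 2 * inverse t) \<longlongrightarrow> x\<^sup>2 / 2 * 0) at_top"
    have e: "(\<lambda>t::real. x\<^sup>2 / 2 * inverse t) = (\<lambda>t. x\<^sup>2 / (2*t))"
      by (rule ext) (simp add: field_simps)
    show ?thesis using a unfolding e by simp
  qed
  show ?thesis
  proof (cases "x = 0")
    case True
    have "Sfun \<nu> 0 = inverse (Gamma (\<nu> + 1))"
      unfolding Sfun_def by (subst suminf_finite[of "{0}"]) auto
    then show ?thesis using True by simp
  next
    case False
    have F: "filterlim (\<lambda>t. x\<^sup>2 / (2*t)) (at 0) at_top"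
    proof -
      have "eventually (\<lambda>t. x\<^sup>2 / (2*t) \<in> UNIV \<and> x\<^sup>2 / (2*t) \<noteq> 0) at_top"
        using eventually_gt_at_top[of 0]
        by (rule eventually_mono) (use False in simp)
      then show ?thesis unfolding filterlim_at using g0 by blast
    qed
    show ?thesis by (rule filterlim_compose[OF L F])
  qed
qed

theorem lemma2p1:
  fixes \<nu> x :: real and M :: "'a measure" and R :: "real \<Rightarrow> 'a \<Rightarrow> real"
  assumes "\<nu> > 0" and "x > 0"
    and "prob_space M"
    and "\<And>t. t \<ge> 0 \<Longrightarrow> R t \<in> borel_measurable M"
    and "\<And>\<omega>. \<omega> \<in> space M \<Longrightarrow> continuous_on {0..} (\<lambda>t. R t \<omega>) \<and> R 0 \<omega> = x"
    and "\<And>t. t > 0 \<Longrightarrow> distr M borel (R t) = bessel_marginal \<nu> x t"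
  shows "((\<lambda>t. t powr \<nu> * prob_space.expectation M (\<lambda>\<omega>. (1 / R t \<omega>) powr (2 * \<nu>)))
           \<longlongrightarrow> 1 / (2 powr \<nu> * Gamma (\<nu> + 1))) at_top"
proof -
  note nu = assms(1) and x = assms(2)
  define g where "g = (\<lambda>t::real. x\<^sup>2 / (2*t))"
  have E: "prob_space.expectation M (\<lambda>\<omega>. (1 / R t \<omega>) powr (2 * \<nu>))
        = (2*t) powr (-\<nu>) * exp (- x\<^sup>2 / (2*t)) * Sfun \<nu> (x\<^sup>2 / (2*t))" if t: "t > 0" for t
  proof -
    have Rm[measurable]: "R t \<in> borel_measurable M" using assms(4) t by simp
    have fm[measurable]: "(\<lambda>y::real. (1 / y) powr (2 * \<nu>)) \<in> borel_measurable borel" by measurable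
    have m1: "(\<lambda>\<omega>. (1 / R t \<omega>) powr (2 * \<nu>)) \<in> borel_measurable M"
      using measurable_compose[OF Rm fm] by simp
    have "prob_space.expectation M (\<lambda>\<omega>. (1 / R t \<omega>) powr (2 * \<nu>))
        = enn2real (\<integral>\<^sup>+\<omega>. ennreal ((1 / R t \<omega>) powr (2 * \<nu>)) \<partial>M)"
      by (rule integral_eq_nn_integral[OF m1]) (rule AE_I2, simp)
    also have "(\<integral>\<^sup>+\<omega>. ennreal ((1 / R t \<omega>) powr (2 * \<nu>)) \<partial>M)
        = (\<integral>\<^sup>+y. ennreal ((1 / y) powr (2 * \<nu>)) \<partial>distr M borel (R t))"
      by (rule nn_integral_distr[symmetric]) measurable
    also have "\<dots> = (\<integral>\<^sup>+y. ennreal ((1 / y) powr (2 * \<nu>)) \<partial>bessel_marginal \<nu> x t)"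
      using assms(6)[OF t] by simp
    also have "\<dots> = (\<integral>\<^sup>+y. (indicator {0<..} y * ennreal (bessel_density \<nu> t x y)) * ennreal ((1 / y) powr (2 * \<nu>)) \<partial>lborel)"
      unfolding bessel_marginal_def
      by (rule nn_integral_density[OF nn_bessel(1)[OF nu x t]]) measurable
    also have "\<dots> = ennreal ((2*t) powr (-\<nu>) * exp (- x\<^sup>2 / (2*t)) * Sfun \<nu> (x\<^sup>2 / (2*t)))"
      by (rule nn_bessel(2)[OF nu x t])
    finally show ?thesis
    proof -
      assume "prob_space.expectation M (\<lambda>\<omega>. (1 / R t \<omega>) powr (2 * \<nu>))
        = enn2real (ennreal ((2*t) powr (-\<nu>) * exp (- x\<^sup>2 / (2*t)) * Sfun \<nu> (x\<^sup>2 / (2*t))))"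
      moreover have "Sfun \<nu> (x\<^sup>2 / (2*t)) \<ge> 0"
        unfolding Sfun_def using t nu
        by (intro suminf_nonneg summable_S) auto
      ultimately show ?thesis by simp
    qed
  qed
  have ev: "eventually (\<lambda>t. 2 powr (-\<nu>) * exp (- g t) * Sfun \<nu> (g t)
      = t powr \<nu> * prob_space.expectation M (\<lambda>\<omega>. (1 / R t \<omega>) powr (2 * \<nu>))) at_top"
    using eventually_gt_at_top[of 0]
  proof (rule eventually_mono)
    fix t :: real assume t: "t > 0"
    have h1: "(2*t) powr (-\<nu>) = 2 powr (-\<nu>) * t powr (-\<nu>)" using t by (simp add: powr_mult)
    have h2: "t powr \<nu> * t powr (-\<nu>) = 1" using t by (simp add: powr_add[symmetric])
    have h3: "t powr \<nu> * (2*t) powr (-\<nu>) = 2 powr (-\<nu>)"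
      unfolding h1 using h2 by (metis mult.left_commute mult.right_neutral)
    have h4: "t powr \<nu> * ((2*t) powr (-\<nu>) * A * B) = (t powr \<nu> * (2*t) powr (-\<nu>)) * A * B" for A B
      by (simp only: mult.assoc)
    then show "2 powr (-\<nu>) * exp (- g t) * Sfun \<nu> (g t)
      = t powr \<nu> * prob_space.expectation M (\<lambda>\<omega>. (1 / R t \<omega>) powr (2 * \<nu>))"
      unfolding E[OF t] g_def h4 h3 by simp
  qed
  have g0: "(g \<longlongrightarrow> 0) at_top"
  proof -
    have "((\<lambda>t. x\<^sup>2 / 2 * inverse t) \<longlongrightarrow> x\<^sup>2 / 2 * 0) at_top"
      by (intro tendsto_mult tendsto_const tendsto_inverse_0_at_top filterlim_ident)
    moreover have "(\<lambda>t::real. x\<^sup>2 / 2 * inverse t) = g"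
      unfolding g_def by (rule ext) (simp add: field_simps)
    ultimately show ?thesis by simp
  qed
  have "((\<lambda>t. 2 powr (-\<nu>) * exp (- g t) * Sfun \<nu> (g t)) \<longlongrightarrow> 2 powr (-\<nu>) * exp (- 0) * inverse (Gamma (\<nu> + 1))) at_top"
  proof -
    have S: "((\<lambda>t. Sfun \<nu> (g t)) \<longlongrightarrow> inverse (Gamma (\<nu> + 1))) at_top"
      using Sfun_lim[OF nu, of x] unfolding g_def .
    have X: "((\<lambda>t. exp (- g t)) \<longlongrightarrow> exp (- 0)) at_top"
      by (rule tendsto_exp[OF tendsto_minus[OF g0]])
    show ?thesis by (rule tendsto_mult[OF tendsto_mult[OF tendsto_const X] S])
  qed
  then have "((\<lambda>t. 2 powr (-\<nu>) * exp (- g t) * Sfun \<nu> (g t)) \<longlongrightarrow> 1 / (2 powr \<nu> * Gamma (\<nu> + 1))) at_top"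
    by (simp add: powr_minus divide_inverse inverse_mult_distrib)
  then show ?thesis using tendsto_cong[OF ev] by simp
qed

end
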